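(* Let $\ell\in V$ be a nonzero $1$-form, let $i,j\in[n]$ be distinct, and let $L$ be a subspace of $\bigwedge^{k}V$ such that $\ell\wedge y=0$ for all $y\in N_{j\to i}L$. Then $\ell\wedge(e_{i}-e_{j})\wedge x=0$ for all $x\in L$. Moreover, if $L$ is nontrivial (no nonzero $v\in V$ satisfies $v\wedge x=0$ for all $x\in L$), then $\ell\wedge(e_{i}-e_{j})\neq0$.
   Context: $\mathbb{F}$ is a field (assumed throughout the paper, for expository purposes, to have characteristic not $2$), $V$ is an $n$-dimensional $\mathbb{F}$-vector space with a fixed basis $e_1,\dots,e_n$, and $\bigwedge V$ its exterior algebra. For $j\in[n]$, $V^{(j)}$ is the span of $\{e_h:h\neq j\}$. Slow shift: for distinct $i,j\in[n]$ and nonzero $m\in\bigwedge^kV$, write uniquely $m=x+e_j\wedge y$ with $x\in\bigwedge^kV^{(j)}$, $y\in\bigwedge^{k-1}V^{(j)}$, and set $N_{j\to i}m=x+e_i\wedge y$ if this is nonzero, and $N_{j\to i}m=e_j\wedge y$ otherwise (the limit as $t\to0$ of the projective action of the linear map $e_j\mapsto e_i+te_j$ fixing the other $e_h$). For a subspace $L$ of $\bigwedge^kV$, $N_{j\to i}L$ is the span of $\{N_{j\to i}m:m\in L\setminus\{0\}\}$. *)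

theory Defs
  imports Main
begin

text \<open>Exterior algebra of an n-dimensional space V over a field with basis e_1..e_n
(indices in {1..n}).  An element of the exterior algebra is represented by its
coefficient function on the standard basis e_S = e_{s1} wedge ... wedge e_{sr}
(s1 < ... < sr), i.e. a function from finite subsets S of {1..n} to the field.\<close>

type_synonym 'a ext = "nat set \<Rightarrow> 'a"

definition ext_zero :: "'a::field ext" where
  "ext_zero = (\<lambda>S. 0)"

definition ext_add :: "'a::field ext \<Rightarrow> 'a ext \<Rightarrow> 'a ext" where
  "ext_add a b = (\<lambda>S. a S + b S)"

definition ext_diff :: "'a::field ext \<Rightarrow> 'a ext \<Rightarrow> 'a ext" where
  "ext_diff a b = (\<lambda>S. a S - b S)"

definition ext_smult :: "'a::field \<Rightarrow> 'a ext \<Rightarrow> 'a ext" where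
  "ext_smult c a = (\<lambda>S. c * a S)"

definition in_ext :: "nat \<Rightarrow> 'a::field ext \<Rightarrow> bool" where
  "in_ext n a \<longleftrightarrow> (\<forall>S. a S \<noteq> 0 \<longrightarrow> S \<subseteq> {1..n})"

definition in_ext_k :: "nat \<Rightarrow> nat \<Rightarrow> 'a::field ext \<Rightarrow> bool" where
  "in_ext_k n k a \<longleftrightarrow> in_ext n a \<and> (\<forall>S. a S \<noteq> 0 \<longrightarrow> card S = k)"

definition ebasis :: "nat \<Rightarrow> 'a::field ext" where
  "ebasis i = (\<lambda>S. if S = {i} then 1 else 0)"

text \<open>Sign of e_T wedge e_U = sign * e_(T union U) for disjoint T, U.\<close>
definition wsign :: "nat set \<Rightarrow> nat set \<Rightarrow> 'a::field" where
  "wsign T U = (- 1) ^ card {(t, u). t \<in> T \<and> u \<in> U \<and> u < t}"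

definition wedge :: "'a::field ext \<Rightarrow> 'a ext \<Rightarrow> 'a ext" where
  "wedge a b = (\<lambda>S. \<Sum>T\<in>Pow S. wsign T (S - T) * a T * b (S - T))"

definition ext_subspace :: "nat \<Rightarrow> nat \<Rightarrow> 'a::field ext set \<Rightarrow> bool" where
  "ext_subspace n k L \<longleftrightarrow> ext_zero \<in> L \<and> (\<forall>a\<in>L. in_ext_k n k a)
     \<and> (\<forall>a\<in>L. \<forall>b\<in>L. ext_add a b \<in> L) \<and> (\<forall>c. \<forall>a\<in>L. ext_smult c a \<in> L)"

definition ext_span :: "'a::field ext set \<Rightarrow> 'a ext set" where
  "ext_span X = {v. \<exists>A c. finite A \<and> A \<subseteq> X \<and> v = (\<lambda>S. \<Sum>u\<in>A. c u * u S)}"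

text \<open>Decomposition m = x + e_j wedge y with x, y not involving e_j.\<close>
definition dec_x :: "nat \<Rightarrow> 'a::field ext \<Rightarrow> 'a ext" where
  "dec_x j m = (\<lambda>S. if j \<in> S then 0 else m S)"

definition dec_y :: "nat \<Rightarrow> 'a::field ext \<Rightarrow> 'a ext" where
  "dec_y j m = (\<lambda>T. if j \<in> T then 0 else wsign {j} T * m (insert j T))"

definition slow_shift :: "nat \<Rightarrow> nat \<Rightarrow> 'a::field ext \<Rightarrow> 'a ext" where
  "slow_shift j i m =
    (let z = ext_add (dec_x j m) (wedge (ebasis i) (dec_y j m))
     in if z \<noteq> ext_zero then z else wedge (ebasis j) (dec_y j m))"

definition slow_shift_space :: "nat \<Rightarrow> nat \<Rightarrow> 'a::field ext set \<Rightarrow> 'a ext set" where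
  "slow_shift_space j i L = ext_span {slow_shift j i m | m. m \<in> L \<and> m \<noteq> ext_zero}"

definition ext_nontrivial :: "nat \<Rightarrow> 'a::field ext set \<Rightarrow> bool" where
  "ext_nontrivial n L \<longleftrightarrow>
     \<not> (\<exists>v. in_ext_k n 1 v \<and> v \<noteq> ext_zero \<and> (\<forall>x\<in>L. wedge v x = ext_zero))"

end

theory Submission
  imports Defs
begin

lemma wedge_inf: "infinite S \<Longrightarrow> wedge a b S = 0"
  by (simp add: wedge_def finite_Pow_iff)

definition oneform :: "'a::field ext \<Rightarrow> bool" where
  "oneform u \<longleftrightarrow> (\<forall>T. u T \<noteq> 0 \<longrightarrow> (\<exists>s. T = {s}))"

lemma wedge_one:
  assumes "oneform u"
  shows "wedge u a S = (\<Sum>s\<in>S. u {s} * wsign {s} (S - {s}) * a (S - {s}))"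
proof (cases "finite S")
  case False thus ?thesis by (simp add: wedge_inf)
next
  case True
  have "wedge u a S = (\<Sum>T\<in>(\<lambda>s. {s}) ` S. wsign T (S - T) * u T * a (S - T))"
    unfolding wedge_def
    by (rule sum.mono_neutral_right) (use True assms in \<open>auto simp: oneform_def\<close>)
  also have "\<dots> = (\<Sum>s\<in>S. wsign {s} (S-{s}) * u {s} * a (S - {s}))"
    by (simp add: sum.reindex inj_on_def)
  finally show ?thesis by (simp add: mult_ac)
qed

lemma wsign_single: "wsign {s} A = (-1) ^ card {a\<in>A. a < s}"
proof -
  have "{(t, u). t \<in> {s} \<and> u \<in> A \<and> u < t} = (\<lambda>u. (s,u)) ` {a\<in>A. a<s}" by auto
  moreover have "card ((\<lambda>u. (s,u)) ` {a\<in>A. a<s}) = card {a\<in>A. a<s}"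
    by (rule card_image) (auto simp: inj_on_def)
  ultimately show ?thesis unfolding wsign_def by simp
qed

lemma wsign_sq: "wsign T U * wsign T U = (1::'a::field)"
  unfolding wsign_def by (simp add: power_mult_distrib[symmetric])

lemma wsign_nz: "wsign T U \<noteq> (0::'a::field)"
  unfolding wsign_def by simp

lemma wsign_union_left:
  assumes "finite U" "finite V" "finite W" "U \<inter> V = {}"
  shows "wsign (U \<union> V) W = (wsign U W * wsign V W :: 'a::field)"
proof -
  have e: "{(t, u). t \<in> U \<union> V \<and> u \<in> W \<and> u < t} = {(t, u). t \<in> U \<and> u \<in> W \<and> u < t} \<union> {(t, u). t \<in> V \<and> u \<in> W \<and> u < t}"
    by auto
  have f1: "finite {(t, u). t \<in> U \<and> u \<in> W \<and> u < t}"
    by (rule finite_subset[of _ "U \<times> W"]) (use assms in auto)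
  have f2: "finite {(t, u). t \<in> V \<and> u \<in> W \<and> u < t}"
    by (rule finite_subset[of _ "V \<times> W"]) (use assms in auto)
  show ?thesis unfolding wsign_def e
    by (subst card_Un_disjoint) (use f1 f2 assms in \<open>auto simp: power_add\<close>)
qed

lemma wsign_union_right:
  assumes "finite U" "finite V" "finite W" "V \<inter> W = {}"
  shows "wsign U (V \<union> W) = (wsign U V * wsign U W :: 'a::field)"
proof -
  have e: "{(t, u). t \<in> U \<and> u \<in> V \<union> W \<and> u < t} = {(t, u). t \<in> U \<and> u \<in> V \<and> u < t} \<union> {(t, u). t \<in> U \<and> u \<in> W \<and> u < t}"
    by auto
  have f1: "finite {(t, u). t \<in> U \<and> u \<in> V \<and> u < t}"
    by (rule finite_subset[of _ "U \<times> V"]) (use assms in auto)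
  have f2: "finite {(t, u). t \<in> U \<and> u \<in> W \<and> u < t}"
    by (rule finite_subset[of _ "U \<times> W"]) (use assms in auto)
  show ?thesis unfolding wsign_def e
    by (subst card_Un_disjoint) (use f1 f2 assms in \<open>auto simp: power_add\<close>)
qed

lemma wedge_assoc: "wedge (wedge a b) c = wedge a (wedge b c)"
proof
  fix S
  show "wedge (wedge a b) c S = wedge a (wedge b c) S"
  proof (cases "finite S")
    case False thus ?thesis by (simp add: wedge_inf)
  next
    case fin: True
    have "wedge (wedge a b) c S = (\<Sum>T\<in>Pow S. \<Sum>U\<in>Pow T. wsign T (S - T) * wsign U (T - U) * a U * b (T - U) * c (S - T))"
      unfolding wedge_def by (simp add: sum_distrib_left sum_distrib_right mult_ac)
    also have "\<dots> = (\<Sum>(T,U)\<in>Sigma (Pow S) Pow. wsign T (S - T) * wsign U (T - U) * a U * b (T - U) * c (S - T))"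
      by (rule sum.Sigma) (use fin in \<open>auto intro: finite_subset\<close>)
    also have "\<dots> = (\<Sum>(U,V)\<in>Sigma (Pow S) (\<lambda>U. Pow (S - U)). wsign U (S - U) * a U * (wsign V (S - U - V) * b V * c (S - U - V)))"
    proof (rule sum.reindex_bij_witness[where i = "\<lambda>(U,V). (U \<union> V, U)" and j = "\<lambda>(T,U). (U, T - U)"])
      fix p assume p: "p \<in> Sigma (Pow S) Pow"
      obtain T U where pe: "p = (T, U)" by (cases p)
      with p have UT: "U \<subseteq> T" "T \<subseteq> S" by auto
      have fT: "finite T" "finite U" using UT fin by (auto intro: finite_subset)
      have fS: "finite (S - T)" "finite (T - U)" using fin fT by auto
      have T: "T = U \<union> (T - U)" "S - U = (T - U) \<union> (S - T)" "S - U - (T - U) = S - T" using UT by auto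
      have s1: "wsign T (S - T) = (wsign U (S - T) * wsign (T - U) (S - T) :: 'a)"
        by (subst T(1)) (rule wsign_union_left, use fT fS in auto)
      have s2: "wsign U (S - U) = (wsign U (T - U) * wsign U (S - T) :: 'a)"
        by (subst T(2)) (rule wsign_union_right, use fT fS in auto)
      show "(\<lambda>(U,V). (U \<union> V, U)) ((\<lambda>(T,U). (U, T - U)) p) = p"
        using UT pe by auto
      show "(\<lambda>(T,U). (U, T - U)) p \<in> Sigma (Pow S) (\<lambda>U. Pow (S - U))"
        using UT pe by auto
      show "(\<lambda>(U,V). wsign U (S - U) * a U * (wsign V (S - U - V) * b V * c (S - U - V))) ((\<lambda>(T,U). (U, T - U)) p) =
         (\<lambda>(T,U). wsign T (S - T) * wsign U (T - U) * a U * b (T - U) * c (S - T)) p"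
        using pe T(3) by (simp add: s1 s2 mult_ac)
    next
      fix q assume q: "q \<in> Sigma (Pow S) (\<lambda>U. Pow (S - U))"
      show "(\<lambda>(T,U). (U, T - U)) ((\<lambda>(U,V). (U \<union> V, U)) q) = q"
        using q by auto
      show "(\<lambda>(U,V). (U \<union> V, U)) q \<in> Sigma (Pow S) Pow" using q by auto
    qed
    also have "\<dots> = (\<Sum>U\<in>Pow S. \<Sum>V\<in>Pow (S - U). wsign U (S - U) * a U * (wsign V (S - U - V) * b V * c (S - U - V)))"
      by (rule sum.Sigma[symmetric]) (use fin in auto)
    also have "\<dots> = wedge a (wedge b c) S"
      unfolding wedge_def by (simp add: sum_distrib_left)
    finally show ?thesis .
  qed
qed


lemma oneform_ebasis: "oneform (ebasis p)"
  unfolding oneform_def ebasis_def by auto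

lemma oneform_diff: "oneform u \<Longrightarrow> oneform v \<Longrightarrow> oneform (ext_diff u v)"
proof -
  assume a: "oneform u" "oneform v"
  show ?thesis unfolding oneform_def
  proof (intro allI impI)
    fix T assume "ext_diff u v T \<noteq> 0"
    then have "u T \<noteq> 0 \<or> v T \<noteq> 0" by (auto simp: ext_diff_def)
    then show "\<exists>s. T = {s}" using a unfolding oneform_def by blast
  qed
qed

lemma oneform_k1: "in_ext_k n 1 u \<Longrightarrow> oneform u"
  unfolding oneform_def in_ext_k_def by (auto simp: card_1_singleton_iff)

lemma wedge_ebasis:
  "wedge (ebasis p) a S = (if finite S \<and> p \<in> S then wsign {p} (S - {p}) * a (S - {p}) else 0)"
proof (cases "finite S")
  case False thus ?thesis by (simp add: wedge_inf)
next
  case True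
  have "wedge (ebasis p) a S = (\<Sum>s\<in>S. (if s = p then wsign {p} (S - {p}) * a (S - {p}) else 0))"
    by (subst wedge_one[OF oneform_ebasis]) (rule sum.cong, auto simp: ebasis_def)
  thus ?thesis using True by simp
qed

lemma wedge_zero_right: "wedge a ext_zero = ext_zero"
  unfolding wedge_def ext_zero_def by simp

lemma wedge_diff_right: "wedge a (ext_diff b c) = ext_diff (wedge a b) (wedge a c)"
  unfolding wedge_def ext_diff_def by (simp add: sum_subtractf algebra_simps)

lemma wedge_diff_left: "wedge (ext_diff a b) c = ext_diff (wedge a c) (wedge b c)"
  unfolding wedge_def ext_diff_def by (simp add: sum_subtractf algebra_simps)

lemma wedge_add_left: "wedge (ext_add a b) c = ext_add (wedge a c) (wedge b c)"
  unfolding wedge_def ext_add_def by (simp add: sum.distrib algebra_simps)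

lemma wedge_smult_left: "wedge (ext_smult k a) c = ext_smult k (wedge a c)"
  unfolding wedge_def ext_smult_def by (simp add: sum_distrib_left algebra_simps)

lemma sign_aux:
  assumes "finite S" "s \<in> S" "t \<in> S" "s < t"
  shows "wsign {s} (S - {s}) * wsign {t} (S - {s} - {t}) =
    - (wsign {t} (S - {t}) * wsign {s} (S - {t} - {s}) :: 'a::field)"
proof -
  have e1: "{a \<in> S - {s}. a < s} = {a \<in> S - {t} - {s}. a < s}" using assms by auto
  have e2: "{a \<in> S - {t}. a < t} = insert s {a \<in> S - {s} - {t}. a < t}" using assms by auto
  have c2: "card {a \<in> S - {t}. a < t} = Suc (card {a \<in> S - {s} - {t}. a < t})"
    unfolding e2 by (rule card_insert_disjoint) (use assms in auto)
  show ?thesis unfolding wsign_single e1 c2 by simp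
qed

lemma sign_swap:
  assumes "finite S" "s \<in> S" "t \<in> S" "s \<noteq> t"
  shows "wsign {s} (S - {s}) * wsign {t} (S - {s} - {t}) =
    - (wsign {t} (S - {t}) * wsign {s} (S - {t} - {s}) :: 'a::field)"
proof (cases "s < t")
  case True thus ?thesis using sign_aux assms by blast
next
  case False
  then have "t < s" using assms by simp
  from sign_aux[OF assms(1,3,2) this, where 'a='a] show ?thesis by simp
qed

lemma wedge_anticomm:
  assumes u: "oneform u" and v: "oneform v"
  shows "wedge u (wedge v c) S = - wedge v (wedge u c) S"
proof (cases "finite S")
  case False thus ?thesis by (simp add: wedge_inf)
next
  case fin: True
  have "wedge u (wedge v c) S = (\<Sum>s\<in>S. \<Sum>t\<in>{t\<in>S. t \<noteq> s}. u {s} * v {t} * (wsign {s} (S - {s}) * wsign {t} (S - {s} - {t})) * c (S - {s} - {t}))"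
    unfolding wedge_one[OF u] wedge_one[OF v]
  proof (rule sum.cong[OF refl])
    fix s assume "s \<in> S"
    have e: "S - {s} = {t\<in>S. t \<noteq> s}" by auto
    show "u {s} * wsign {s} (S - {s}) * (\<Sum>t\<in>S - {s}. v {t} * wsign {t} (S - {s} - {t}) * c (S - {s} - {t})) =
      (\<Sum>t\<in>{t\<in>S. t \<noteq> s}. u {s} * v {t} * (wsign {s} (S - {s}) * wsign {t} (S - {s} - {t})) * c (S - {s} - {t}))"
      unfolding e sum_distrib_left by (rule sum.cong[OF refl]) (simp add: mult_ac)
  qed
  also have "\<dots> = (\<Sum>t\<in>S. \<Sum>s\<in>{s\<in>S. t \<noteq> s}. u {s} * v {t} * (wsign {s} (S - {s}) * wsign {t} (S - {s} - {t})) * c (S - {s} - {t}))"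
    by (rule sum.swap_restrict) (use fin in auto)
  also have "\<dots> = (\<Sum>t\<in>S. \<Sum>s\<in>{s\<in>S. t \<noteq> s}. - (u {s} * v {t} * (wsign {t} (S - {t}) * wsign {s} (S - {t} - {s})) * c (S - {t} - {s})))"
  proof (rule sum.cong[OF refl], rule sum.cong[OF refl])
    fix t s assume ts: "t \<in> S" "s \<in> {s\<in>S. t \<noteq> s}"
    then have e: "S - {s} - {t} = S - {t} - {s}" by auto
    have sw: "wsign {s} (S - {s}) * wsign {t} (S - {s} - {t}) =
      - (wsign {t} (S - {t}) * wsign {s} (S - {t} - {s}) :: 'a)"
      by (rule sign_swap) (use ts fin in auto)
    show "u {s} * v {t} * (wsign {s} (S - {s}) * wsign {t} (S - {s} - {t})) * c (S - {s} - {t}) =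
      - (u {s} * v {t} * (wsign {t} (S - {t}) * wsign {s} (S - {t} - {s})) * c (S - {t} - {s}))"
      by (subst sw, subst e, simp)
  qed
  also have "\<dots> = (\<Sum>t\<in>S. - (v {t} * wsign {t} (S - {t}) * (\<Sum>s\<in>S - {t}. u {s} * wsign {s} (S - {t} - {s}) * c (S - {t} - {s}))))"
  proof (rule sum.cong[OF refl])
    fix t assume "t \<in> S"
    have e: "{s\<in>S. t \<noteq> s} = S - {t}" by auto
    have "(\<Sum>s\<in>{s\<in>S. t \<noteq> s}. - (u {s} * v {t} * (wsign {t} (S - {t}) * wsign {s} (S - {t} - {s})) * c (S - {t} - {s}))) = - (\<Sum>s\<in>S - {t}. u {s} * v {t} * (wsign {t} (S - {t}) * wsign {s} (S - {t} - {s})) * c (S - {t} - {s}))" unfolding e by (rule sum_negf)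
    also have "(\<Sum>s\<in>S - {t}. u {s} * v {t} * (wsign {t} (S - {t}) * wsign {s} (S - {t} - {s})) * c (S - {t} - {s})) = v {t} * wsign {t} (S - {t}) * (\<Sum>s\<in>S - {t}. u {s} * wsign {s} (S - {t} - {s}) * c (S - {t} - {s}))"
      unfolding sum_distrib_left by (rule sum.cong[OF refl]) (simp add: mult_ac)
    finally show "(\<Sum>s\<in>{s\<in>S. t \<noteq> s}. - (u {s} * v {t} * (wsign {t} (S - {t}) * wsign {s} (S - {t} - {s})) * c (S - {t} - {s}))) = - (v {t} * wsign {t} (S - {t}) * (\<Sum>s\<in>S - {t}. u {s} * wsign {s} (S - {t} - {s}) * c (S - {t} - {s})))" .
  qed
  also have "\<dots> = - wedge v (wedge u c) S"
    unfolding wedge_one[OF u] wedge_one[OF v] by (simp add: sum_negf)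
  finally show ?thesis .
qed

lemma wedge_self:
  assumes c2: "(2::'a::field) \<noteq> 0" and u: "oneform u"
  shows "wedge u (wedge u (c::'a ext)) = ext_zero"
proof
  fix S
  have "wedge u (wedge u c) S = - wedge u (wedge u c) S" by (rule wedge_anticomm[OF u u])
  then have "wedge u (wedge u c) S + wedge u (wedge u c) S = 0" by (metis add.left_inverse)
  then have "2 * wedge u (wedge u c) S = 0" by (simp only: mult_2)
  thus "wedge u (wedge u c) S = ext_zero S" using c2 by (simp add: ext_zero_def)
qed


lemma span_gen: "x \<in> X \<Longrightarrow> x \<in> ext_span X"
  unfolding ext_span_def by (rule CollectI, rule exI[of _ "{x}"], rule exI[of _ "\<lambda>_. 1"]) auto

definition fs :: "'a::field ext \<Rightarrow> bool" where
  "fs m \<longleftrightarrow> (\<forall>S. m S \<noteq> 0 \<longrightarrow> finite S)"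

lemma fs_L: "ext_subspace n k L \<Longrightarrow> m \<in> L \<Longrightarrow> fs m"
  unfolding ext_subspace_def in_ext_k_def in_ext_def fs_def
  by (meson finite_atLeastAtMost finite_subset)

lemma dec_eq:
  assumes "fs m"
  shows "m S = dec_x j m S + wedge (ebasis j) (dec_y j m) S"
proof (cases "finite S")
  case False
  then have "m S = 0" using assms unfolding fs_def by blast
  thus ?thesis using False by (simp add: wedge_ebasis dec_x_def)
next
  case True
  show ?thesis
  proof (cases "j \<in> S")
    case False thus ?thesis by (simp add: wedge_ebasis dec_x_def)
  next
    case jS: True
    have "insert j (S - {j}) = S" using jS by auto
    then have "wedge (ebasis j) (dec_y j m) S = (wsign {j} (S - {j}) * wsign {j} (S - {j})) * m S"
      using True jS by (simp add: wedge_ebasis dec_y_def mult_ac)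
    thus ?thesis using jS by (simp add: wsign_sq dec_x_def)
  qed
qed

lemma coord:
  assumes l: "oneform l" and ij: "i \<noteq> j"
    and h: "wedge l (ext_diff (ebasis i) (ebasis j)) = ext_zero"
  shows "l = ext_smult (l {i}) (ext_diff (ebasis i) (ebasis j))"
proof -
  define w :: "'a ext" where "w = ext_diff (ebasis i) (ebasis j)"
  have F: "(\<Sum>s\<in>S. l {s} * wsign {s} (S - {s}) * w (S - {s})) = 0" for S
    using fun_cong[OF h, of S] unfolding wedge_one[OF l] w_def by (simp add: ext_zero_def)
  have wv: "w T = (if T = {i} then 1 else if T = {j} then -1 else 0)" for T
    using ij by (auto simp: w_def ext_diff_def ebasis_def)
  have la: "l {a} = 0" if "a \<noteq> i" "a \<noteq> j" for a
  proof -
    have "{a, i} - {a} = {i}" "{a, i} - {i} = {a}" using that by auto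
    then have "l {a} * wsign {a} {i} = 0" using F[of "{a,i}"] that ij by (simp add: wv)
    thus ?thesis by (simp add: wsign_nz)
  qed
  have "{i, j} - {i} = {j}" "{i, j} - {j} = {i}" using ij by auto
  then have "- (l {i} * wsign {i} {j}) + l {j} * wsign {j} {i} = 0"
    using F[of "{i,j}"] ij by (simp add: wv)
  then have lj: "l {j} = - l {i}"
  proof (cases "i < j")
    case True
    have e: "{a \<in> {j}. a < i} = {}" "{a \<in> {i}. a < j} = {i}" using True by auto
    have "wsign {i} {j} = (1::'a)" "wsign {j} {i} = (-1::'a)" unfolding wsign_single e by simp_all
    then show ?thesis using \<open>- (l {i} * wsign {i} {j}) + l {j} * wsign {j} {i} = 0\<close>
      by (simp add: add_eq_0_iff)
  next
    case False
    then have "j < i" using ij by simp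
    then have e: "{a \<in> {j}. a < i} = {j}" "{a \<in> {i}. a < j} = {}" by auto
    have "wsign {i} {j} = (-1::'a)" "wsign {j} {i} = (1::'a)" unfolding wsign_single e by simp_all
    then show ?thesis using \<open>- (l {i} * wsign {i} {j}) + l {j} * wsign {j} {i} = 0\<close>
      by (simp add: add_eq_0_iff)
  qed
  show ?thesis unfolding w_def[symmetric]
  proof
    fix S
    show "l S = ext_smult (l {i}) w S"
    proof (cases "\<exists>s. S = {s}")
      case True
      then obtain s where s: "S = {s}" by blast
      show ?thesis using la[of s] lj ij by (auto simp: s ext_smult_def wv)
    next
      case False
      then have "l S = 0" using l unfolding oneform_def by blast
      thus ?thesis using False by (auto simp: ext_smult_def wv)
    qed
  qed
qed


lemma ext_diff_zero: "ext_diff a ext_zero = a"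
  by (simp add: ext_diff_def ext_zero_def)

theorem lemma5p4:
  fixes n k i j :: nat and l :: "'a::field ext" and L :: "'a ext set"
  assumes char: "(2::'a) \<noteq> 0"
    and l1: "in_ext_k n 1 l" and l0: "l \<noteq> ext_zero"
    and ij: "i \<in> {1..n}" "j \<in> {1..n}" "i \<noteq> j"
    and L: "ext_subspace n k L"
    and hyp: "\<forall>y\<in>slow_shift_space j i L. wedge l y = ext_zero"
  shows "(\<forall>x\<in>L. wedge (wedge l (ext_diff (ebasis i) (ebasis j))) x = ext_zero)
    \<and> (ext_nontrivial n L \<longrightarrow> wedge l (ext_diff (ebasis i) (ebasis j)) \<noteq> ext_zero)"
proof -
  define w :: "'a ext" where "w = ext_diff (ebasis i) (ebasis j)"
  have ow: "oneform w" unfolding w_def by (intro oneform_diff oneform_ebasis)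
  have ol: "oneform l" using l1 by (rule oneform_k1)
  have ww: "wedge w (wedge w c) = ext_zero" for c by (rule wedge_self[OF char ow])
  have inspan: "slow_shift j i m \<in> slow_shift_space j i L" if "m \<in> L" "m \<noteq> ext_zero" for m
    unfolding slow_shift_space_def by (rule span_gen) (use that in blast)
  have decomp: "m = ext_diff (ext_add (dec_x j m) (wedge (ebasis i) (dec_y j m))) (wedge w (dec_y j m))"
    if "m \<in> L" for m
  proof
    fix S
    have "fs m" using fs_L[OF L that] .
    from dec_eq[OF this, of S j]
    show "m S = ext_diff (ext_add (dec_x j m) (wedge (ebasis i) (dec_y j m))) (wedge w (dec_y j m)) S"
      unfolding w_def wedge_diff_left by (simp add: ext_diff_def ext_add_def)
  qed
  have part1: "wedge (wedge l w) m = ext_zero" if mL: "m \<in> L" for m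
  proof (cases "m = ext_zero")
    case True thus ?thesis by (simp add: wedge_zero_right)
  next
    case m0: False
    define z where "z = ext_add (dec_x j m) (wedge (ebasis i) (dec_y j m))"
    have wm: "wedge w m = wedge w z"
      by (subst decomp[OF mL]) (simp add: z_def[symmetric] wedge_diff_right ww ext_diff_zero)
    show ?thesis
    proof (cases "z = ext_zero")
      case True
      thus ?thesis by (simp add: wedge_assoc wm wedge_zero_right)
    next
      case False
      then have "slow_shift j i m = z" unfolding slow_shift_def z_def Let_def by simp
      then have lz: "wedge l z = ext_zero" using hyp inspan[OF mL m0] by simp
      show ?thesis
      proof
        fix S
        have "wedge (wedge l w) m S = wedge l (wedge w z) S" by (simp add: wedge_assoc wm)
        also have "\<dots> = - wedge w (wedge l z) S" by (rule wedge_anticomm[OF ol ow])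
        also have "\<dots> = 0" by (simp add: lz wedge_zero_right) (simp add: ext_zero_def)
        finally show "wedge (wedge l w) m S = ext_zero S" by (simp add: ext_zero_def)
      qed
    qed
  qed
  have part2: False if nt: "ext_nontrivial n L" and lw: "wedge l w = ext_zero"
  proof -
    have lc: "l = ext_smult (l {i}) w" using coord[OF ol ij(3)] lw by (simp add: w_def)
    have c0: "l {i} \<noteq> 0"
    proof
      assume "l {i} = 0"
      then have "l = ext_zero"
        using lc by (intro ext) (metis ext_smult_def ext_zero_def mult_zero_left)
      thus False using l0 by simp
    qed
    have hw: "wedge w y = ext_zero" if "y \<in> slow_shift_space j i L" for y
    proof
      fix S
      have "wedge l y S = 0" using hyp that by (simp add: ext_zero_def)
      then have "ext_smult (l {i}) (wedge w y) S = 0"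
        by (subst (asm) lc) (simp only: wedge_smult_left)
      then have "l {i} * wedge w y S = 0" by (simp add: ext_smult_def)
      thus "wedge w y S = ext_zero S" using c0 by (simp add: ext_zero_def)
    qed
    have ei: "wedge (ebasis i) m = ext_zero" if mL: "m \<in> L" for m
    proof (cases "m = ext_zero")
      case True thus ?thesis by (simp add: wedge_zero_right)
    next
      case m0: False
      define X where "X = dec_x j m"
      define Y where "Y = dec_y j m"
      define z where "z = ext_add X (wedge (ebasis i) Y)"
      have fm: "fs m" using fs_L[OF L mL] .
      show ?thesis
      proof (cases "z = ext_zero")
        case False
        then have "slow_shift j i m = z" unfolding slow_shift_def z_def X_def Y_def Let_def by simp
        then have wz: "wedge w z = ext_zero" using hw inspan[OF mL m0] by simp
        have zj: "z T = 0" if "j \<in> T" for T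
          using that ij(3) by (simp add: z_def X_def Y_def ext_add_def dec_x_def dec_y_def wedge_ebasis)
        have "z = ext_zero"
        proof
          fix T
          show "z T = ext_zero T"
          proof (cases "j \<in> T")
            case True thus ?thesis using zj by (simp add: ext_zero_def)
          next
            case jT: False
            show ?thesis
            proof (cases "finite T")
              case False
              then have "m T = 0" using fm unfolding fs_def by blast
              thus ?thesis using False jT
                by (simp add: z_def X_def ext_add_def dec_x_def wedge_ebasis ext_zero_def)
            next
              case True
              have "wedge w z (insert j T) = 0" using wz by (simp add: ext_zero_def)
              moreover have "wedge w z (insert j T) = wedge (ebasis i) z (insert j T) - wedge (ebasis j) z (insert j T)"
                by (simp only: w_def wedge_diff_left) (simp add: ext_diff_def)
              moreover have "insert j T - {i} \<noteq> {}" "j \<in> insert j T - {i}" using ij(3) by auto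
              moreover have "insert j T - {j} = T" using jT by auto
              ultimately have "wsign {j} T * z T = 0"
                using True zj[of "insert j T - {i}"]
                by (simp add: wedge_ebasis split: if_split_asm)
              thus ?thesis by (simp add: wsign_nz ext_zero_def)
            qed
          qed
        qed
        with False show ?thesis by simp
      next
        case True
        then have "slow_shift j i m = wedge (ebasis j) Y"
          unfolding slow_shift_def z_def X_def Y_def Let_def by simp
        then have wjY: "wedge w (wedge (ebasis j) Y) = ext_zero" using hw inspan[OF mL m0] by simp
        have "wedge w (wedge w Y) = ext_diff (wedge w (wedge (ebasis i) Y)) (wedge w (wedge (ebasis j) Y))"
        proof -
          have "wedge w Y = ext_diff (wedge (ebasis i) Y) (wedge (ebasis j) Y)"
            by (simp only: w_def wedge_diff_left)
          then show ?thesis by (simp only: wedge_diff_right)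
        qed
        then have wiY: "wedge w (wedge (ebasis i) Y) = ext_zero"
          using ww[of Y] wjY by (simp add: ext_diff_zero)
        have m': "m = ext_diff ext_zero (wedge w Y)"
          using decomp[OF mL] True unfolding z_def X_def Y_def by simp
        show ?thesis
        proof
          fix S
          have "wedge (ebasis i) m S = 0 - wedge (ebasis i) (wedge w Y) S"
            by (subst m', simp only: wedge_diff_right wedge_zero_right) (simp add: ext_diff_def ext_zero_def)
          also have "\<dots> = wedge w (wedge (ebasis i) Y) S"
            using wedge_anticomm[OF oneform_ebasis ow] by simp
          also have "\<dots> = 0" using wiY by (simp add: ext_zero_def)
          finally show "wedge (ebasis i) m S = ext_zero S" by (simp add: ext_zero_def)
        qed
      qed
    qed
    have "in_ext_k n 1 (ebasis i :: 'a ext)"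
      using ij(1) by (auto simp: in_ext_k_def in_ext_def ebasis_def split: if_splits)
    moreover have "ebasis i \<noteq> (ext_zero :: 'a ext)"
      by (metis ebasis_def ext_zero_def one_neq_zero)
    ultimately show False using nt ei unfolding ext_nontrivial_def by blast
  qed
  show ?thesis using part1 part2 unfolding w_def by blast
qed

end
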